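(* Let $X$ be a nonempty set, $f:X\to X$ a function, and $\tau_2$ the fuzzy topology on $X$ defined below. Then $(X,\tau_2)$ is regular if and only if $f$ is onto.
   Context: A fuzzy subset of $X$ is a function $\mu:X\to[0,1]$; union is the pointwise supremum, intersection the pointwise minimum, complement $1-\mu$; $\emptyset$ is the constant $0$ and $X$ the constant $1$. A fuzzy topology is a family of fuzzy subsets containing $\emptyset$ and $X$, closed under arbitrary unions and finite intersections; complements of open fuzzy sets are closed; the topology generated by a base $\mathbb{B}$ consists of $\emptyset$ and all unions of subfamilies of $\mathbb{B}$. $\mathbb{N}=\{1,2,\dots\}$, $f^0=\mathrm{id}_X$, $f^{n+1}=f^n\circ f$. Definition of $\tau_2$: $J_0=\bigcap_{n\in\mathbb{N}} f^n(X)$, $J_n=f^{n-1}(X)\setminus f^n(X)$ for $n\in\mathbb{N}$; for $m\in\mathbb{N}$, $\mu_{K_m}(x)=\min\{1,n/m\}$ if $x\in J_n$ with $n\ge1$, and $\mu_{K_m}(x)=1$ otherwise; $\tau_2$ is generated by the base $\{K_m:m\in\mathbb{N}\}$. A fuzzy point $x_p$ ($x\in X$, $0<p\le1$) belongs to a fuzzy set $F$ iff $p\le\mu_F(x)$. The space is regular if for every fuzzy point $x_p$ and every closed fuzzy set $F$ with $x_p\notin F$ there exist open fuzzy sets $U,V$ with $x_p\in U$, $F\subseteq V$ and $U\cap V=\emptyset$. *)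

theory Defs
  imports Complex_Main
begin

text \<open>Fuzzy subsets of the ambient type 'a are functions 'a \<Rightarrow> real
  (with values in [0,1]). The set X is the (nonempty) universe of type 'a.\<close>

definition fuzzy_closed :: "('a \<Rightarrow> real) set \<Rightarrow> ('a \<Rightarrow> real) \<Rightarrow> bool" where
  "fuzzy_closed T F \<longleftrightarrow> (\<lambda>x. 1 - F x) \<in> T"

text \<open>Fuzzy point x_p belongs to F iff p \<le> F x.\<close>
definition fuzzy_regular :: "('a \<Rightarrow> real) set \<Rightarrow> bool" where
  "fuzzy_regular T \<longleftrightarrow>
     (\<forall>x p F. 0 < p \<and> p \<le> 1 \<and> fuzzy_closed T F \<and> \<not> (p \<le> F x) \<longrightarrow>
        (\<exists>U V. U \<in> T \<and> V \<in> T \<and> p \<le> U x \<and> (\<forall>y. F y \<le> V y)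
               \<and> (\<lambda>y. min (U y) (V y)) = (\<lambda>y. 0)))"

definition J0 :: "('a \<Rightarrow> 'a) \<Rightarrow> 'a set" where
  "J0 f = (\<Inter>n\<in>{1..}. range (f ^^ n))"

definition J :: "('a \<Rightarrow> 'a) \<Rightarrow> nat \<Rightarrow> 'a set" where
  "J f n = range (f ^^ (n - 1)) - range (f ^^ n)"

definition K :: "('a \<Rightarrow> 'a) \<Rightarrow> nat \<Rightarrow> 'a \<Rightarrow> real" where
  "K f m x = (if \<exists>n\<ge>1. x \<in> J f n
              then min 1 (real (THE n. n \<ge> 1 \<and> x \<in> J f n) / real m)
              else 1)"

definition tau2_base :: "('a \<Rightarrow> 'a) \<Rightarrow> ('a \<Rightarrow> real) set" where
  "tau2_base f = {K f m | m. m \<ge> 1}"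

text \<open>Topology generated by the base: the empty fuzzy set together with all
  unions (pointwise suprema) of nonempty subfamilies of the base (the union of
  the empty subfamily is the empty fuzzy set).\<close>
definition tau2 :: "('a \<Rightarrow> 'a) \<Rightarrow> ('a \<Rightarrow> real) set" where
  "tau2 f = insert (\<lambda>x. 0)
     {(\<lambda>x. SUP B\<in>S. B x) | S. S \<noteq> {} \<and> S \<subseteq> tau2_base f}"

end

theory Submission
  imports Defs
begin

lemma range_funpow_mono: "range ((f::'a\<Rightarrow>'a) ^^ (a + b)) \<subseteq> range (f ^^ a)"
  by (auto simp: funpow_add)

lemma J_unique:
  assumes "x \<in> J f n" "x \<in> J f n'" "n \<ge> 1" "n' \<ge> 1"
  shows "n = n'"
proof (rule ccontr)
  assume "n \<noteq> n'"
  then consider "n < n'" | "n' < n" by linarith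
  then show False
  proof cases
    case 1
    have "range (f ^^ (n + (n' - 1 - n))) \<subseteq> range (f ^^ n)" by (rule range_funpow_mono)
    moreover have "n + (n' - 1 - n) = n' - 1" using 1 by simp
    ultimately show False using assms unfolding J_def by auto
  next
    case 2
    have "range (f ^^ (n' + (n - 1 - n'))) \<subseteq> range (f ^^ n')" by (rule range_funpow_mono)
    moreover have "n' + (n - 1 - n') = n - 1" using 2 by simp
    ultimately show False using assms unfolding J_def by auto
  qed
qed

lemma K_J:
  assumes "x \<in> J f n" "n \<ge> 1"
  shows "K f m x = min 1 (real n / real m)"
proof -
  have "(THE n. n \<ge> 1 \<and> x \<in> J f n) = n"
    using assms J_unique[of x f] by (intro the_equality) auto
  thus ?thesis using assms unfolding K_def by auto
qed

lemma K_pos: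
  assumes "m \<ge> 1"
  shows "K f m x > 0"
proof (cases "\<exists>n\<ge>1. x \<in> J f n")
  case True
  then obtain n where "n \<ge> 1" "x \<in> J f n" by auto
  thus ?thesis using K_J[of x f n m] assms by simp
next
  case False
  show ?thesis unfolding K_def by (subst if_not_P[OF False]) simp
qed

lemma K_le1: "K f m x \<le> 1"
  unfolding K_def by auto

lemma tau2_pos:
  assumes "U \<in> tau2 f" "U \<noteq> (\<lambda>x. 0)"
  shows "U x > 0"
proof -
  obtain S where S: "S \<noteq> {}" "S \<subseteq> tau2_base f" "U = (\<lambda>x. SUP B\<in>S. B x)"
    using assms unfolding tau2_def by auto
  obtain B where B: "B \<in> S" using S by auto
  then obtain m where m: "m \<ge> 1" "B = K f m" using S unfolding tau2_base_def by auto
  have bdd: "bdd_above ((\<lambda>B. B x) ` S)"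
    using S(2) K_le1 unfolding tau2_base_def bdd_above_def by fastforce
  have "B x \<le> (SUP B\<in>S. B x)" using cSUP_upper[OF B bdd] .
  moreover have "B x > 0" using m K_pos by simp
  ultimately show ?thesis using S by simp
qed

lemma K_in_tau2:
  assumes "m \<ge> 1" shows "K f m \<in> tau2 f"
proof -
  have "K f m = (\<lambda>x. SUP B\<in>{K f m}. B x)" by simp
  moreover have "{K f m} \<subseteq> tau2_base f" using assms unfolding tau2_base_def by auto
  ultimately show ?thesis unfolding tau2_def by blast
qed

theorem proposition3p10:
  fixes f :: "'a \<Rightarrow> 'a"
  shows "fuzzy_regular (tau2 f) \<longleftrightarrow> surj f"
proof
  assume reg: "fuzzy_regular (tau2 f)"
  show "surj f"
  proof (rule ccontr)
    assume "\<not> surj f"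
    then obtain x0 where x0: "x0 \<notin> range f" by auto
    have xJ: "x0 \<in> J f 1" using x0 unfolding J_def by simp
    have K2: "K f 2 x0 = 1/2" using K_J[OF xJ, of 2] by simp
    define F where "F = (\<lambda>y. 1 - K f 2 y)"
    have cl: "fuzzy_closed (tau2 f) F"
      unfolding fuzzy_closed_def F_def using K_in_tau2[of 2 f] by simp
    have "\<not> (1 \<le> F x0)" unfolding F_def using K2 by simp
    have ex: "\<exists>U V. U \<in> tau2 f \<and> V \<in> tau2 f \<and> 1 \<le> U x0 \<and> (\<forall>y. F y \<le> V y)
      \<and> (\<lambda>y. min (U y) (V y)) = (\<lambda>y. 0)"
    proof -
      have "0 < (1::real) \<and> (1::real) \<le> 1 \<and> fuzzy_closed (tau2 f) F \<and> \<not> (1 \<le> F x0)"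
        using cl \<open>\<not> (1 \<le> F x0)\<close> by simp
      with reg show ?thesis unfolding fuzzy_regular_def by blast
    qed
    then obtain U V where UV: "U \<in> tau2 f" "V \<in> tau2 f" "1 \<le> U x0" "\<forall>y. F y \<le> V y"
      "(\<lambda>y. min (U y) (V y)) = (\<lambda>y. 0)" by blast
    have "U \<noteq> (\<lambda>x. 0)" using UV(3) by auto
    hence "U x0 > 0" using tau2_pos[OF UV(1)] by blast
    moreover have "V \<noteq> (\<lambda>x. 0)"
    proof
      assume "V = (\<lambda>x. 0)"
      hence "F x0 \<le> 0" using UV(4) by simp
      thus False using K2 unfolding F_def by simp
    qed
    hence "V x0 > 0" using tau2_pos[OF UV(2)] by blast
    ultimately have "min (U x0) (V x0) > 0" by simp
    thus False using fun_cong[OF UV(5), of x0] by simp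
  qed
next
  assume s: "surj f"
  have Jempty: "J f n = {}" for n
    using surj_fn[OF s, of n] unfolding J_def by simp
  have K1: "K f m = (\<lambda>x. 1)" for m
    unfolding K_def Jempty by simp
  have base: "tau2_base f \<subseteq> {\<lambda>x. 1}" unfolding tau2_base_def K1 by auto
  have tau: "U \<in> tau2 f \<Longrightarrow> U = (\<lambda>x. 0) \<or> U = (\<lambda>x. 1)" for U
  proof -
    assume "U \<in> tau2 f"
    then consider "U = (\<lambda>x. 0)" | S where "S \<noteq> {}" "S \<subseteq> tau2_base f" "U = (\<lambda>x. SUP B\<in>S. B x)"
      unfolding tau2_def by auto
    thus ?thesis
    proof cases
      case (2 S)
      hence "S = {\<lambda>x. 1}" using base by blast
      thus ?thesis using 2 by simp
    qed simp
  qed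
  have one: "(\<lambda>x. 1) \<in> tau2 f" using K_in_tau2[of 1 f] K1 by simp
  have zero: "(\<lambda>x. 0) \<in> tau2 f" unfolding tau2_def by simp
  show "fuzzy_regular (tau2 f)"
    unfolding fuzzy_regular_def
  proof (intro allI impI)
    fix x p F
    assume a: "0 < p \<and> p \<le> 1 \<and> fuzzy_closed (tau2 f) F \<and> \<not> p \<le> F x"
    hence "(\<lambda>x. 1 - F x) = (\<lambda>x. 0) \<or> (\<lambda>x. 1 - F x) = (\<lambda>x. 1)"
      using tau unfolding fuzzy_closed_def by blast
    moreover have "(\<lambda>x. 1 - F x) \<noteq> (\<lambda>x. 0)"
    proof
      assume "(\<lambda>x. 1 - F x) = (\<lambda>x. 0)"
      hence "F x = 1" by (metis eq_iff_diff_eq_0)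
      thus False using a by simp
    qed
    ultimately have "(\<lambda>x. 1 - F x) = (\<lambda>x. 1)" by blast
    hence "\<forall>y. F y = 0" by (metis diff_left_imp_eq cancel_comm_monoid_add_class.diff_zero)
    thus "\<exists>U V. U \<in> tau2 f \<and> V \<in> tau2 f \<and> p \<le> U x \<and> (\<forall>y. F y \<le> V y)
               \<and> (\<lambda>y. min (U y) (V y)) = (\<lambda>y. 0)"
      using one zero a by (intro exI[of _ "\<lambda>x. 1"] exI[of _ "\<lambda>x. 0"]) auto
  qed
qed

end
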